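(* Let $\beta,\gamma\in\mathbb{C}$ with $\gamma\neq1$ and $\beta\neq\gamma$, let $c\in\mathbb{C}\setminus\{0\}$, and for index $n$ consider the discrete system for $(x_n,y_n)$ \[ (x_{n+1}+y_n)(x_n+y_n)=\frac{\gamma-1}{c^2}\,y_n(y_n-c)\Big(y_n-c\frac{\gamma-\beta}{\gamma-1}\Big),\quad (x_n+y_{n-1})(x_n+y_n)=\frac{x_n(x_n+c)}{x_n-\frac{cn}{\gamma-1}}\Big(x_n+c\frac{\gamma-\beta}{\gamma-1}\Big), \] together with the differential system in $c$ \[ \begin{aligned} \frac{dx}{dc}&=\frac{(n+1)x+ny}{c}-\frac{\gamma-1}{c^2}x(x+y)+\frac{x(x+c)\big(c(\gamma-\beta)+(\gamma-1)x\big)}{c^2(x+y)},\\ \frac{dy}{dc}&=-x+\frac{y}{c}+y\Big(-1+\frac{(\beta-1)(y-c)}{c(x+y)}+\frac{(\gamma-1)(y-c)^2}{c^2(x+y)}\Big). \end{aligned} \] Define the birational change of variables and parameter identification \[ q=\frac{(\gamma-1)y(y-c)}{c^2(x+y)},\qquad p=\frac{c(x+c)}{y-c}+\frac{c^2(\gamma+n+1-\beta)(x+y)}{c^2x+y\big(c(\gamma+c-1)-(\gamma-1)y\big)},\qquad t=c, \] \[ a_0=n+1,\quad a_1=\gamma-1,\quad a_2=2-\beta,\quad a_3=-\gamma-n. \] Then this change of variables simultaneously transforms the discrete system into the discrete Painlev\'e equation \[ q_{n+1}=\frac{p_n+t}{t}\Big(1-\frac{a_0+a_1}{a_0+(p_n+t)q_n}\Big),\qquad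 p_{n+1}=\frac{1}{1-q_{n+1}}\Big(a_2+\frac{(a_0+a_1)p_n}{t+p_n-t\,q_{n+1}}\Big), \] with parameter evolution $n\mapsto n+1$ given by $(a_0,a_1,a_2,a_3)\mapsto(a_0+1,a_1,a_2,a_3-1)$ (the $a_i$ in the equations being those at index $n$), and transforms the differential system into the Hamiltonian system \[ \frac{dq}{dt}=\frac{1}{t}\Big(q(q-1)(2p+t)-a_1(q-1)-a_3q\Big),\qquad \frac{dp}{dt}=\frac{1}{t}\Big(p(p+t)(1-2q)+(a_1+a_3)p-a_2t\Big). \]
   Context: The discrete system arises from the recurrence coefficients of polynomials orthogonal with respect to the generalised Meixner weight $\frac{(\gamma)_kc^k}{(\beta)_kk!}$ on $\mathbb{Z}_{\ge0}$. The Hamiltonian system is a Hamiltonian form of the fifth Painlev\'e equation, with $a_0+a_1+a_2+a_3=1$. *)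

theory Defs
  imports "HOL-Analysis.Analysis"
begin

definition qv :: "complex \<Rightarrow> complex \<Rightarrow> complex \<Rightarrow> complex \<Rightarrow> complex" where
  "qv \<gamma> c x y = (\<gamma> - 1) * y * (y - c) / (c\<^sup>2 * (x + y))"

definition pv :: "complex \<Rightarrow> complex \<Rightarrow> nat \<Rightarrow> complex \<Rightarrow> complex \<Rightarrow> complex \<Rightarrow> complex" where
  "pv \<beta> \<gamma> n c x y =
     c * (x + c) / (y - c)
     + c\<^sup>2 * (\<gamma> + of_nat n + 1 - \<beta>) * (x + y)
       / (c\<^sup>2 * x + y * (c * (\<gamma> + c - 1) - (\<gamma> - 1) * y))"

text \<open>Parameter identification at index n (a3 chosen so that a0+a1+a2+a3 = 1).\<close>

definition a0 :: "nat \<Rightarrow> complex" where "a0 n = of_nat n + 1"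
definition a1 :: "complex \<Rightarrow> complex" where "a1 \<gamma> = \<gamma> - 1"
definition a2 :: "complex \<Rightarrow> complex" where "a2 \<beta> = 2 - \<beta>"
definition a3 :: "complex \<Rightarrow> complex \<Rightarrow> nat \<Rightarrow> complex" where
  "a3 \<beta> \<gamma> n = \<beta> - \<gamma> - of_nat n - 1"

end

theory Submission
  imports Defs
begin

lemma qv_mul:
  assumes c: "c \<noteq> 0" and S: "x + y \<noteq> 0"
  shows "c\<^sup>2 * (x+y) * qv g c x y = (g-1)*y*(y-c)"
proof -
  have nz: "c\<^sup>2 * (x+y) \<noteq> 0" using c S by simp
  show ?thesis unfolding qv_def using nz by simp
qed

lemma pv_alt:
  fixes g b c x y :: complex
  assumes c: "c \<noteq> 0" and S: "x + y \<noteq> 0" and Y: "y \<noteq> c"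
    and D: "c\<^sup>2 * x + y * (c * (g + c - 1) - (g - 1) * y) \<noteq> 0"
  shows "1 - qv g c x y \<noteq> 0"
    and "pv b g n c x y = c*(x+c)/(y-c) + (g + of_nat n + 1 - b)/(1 - qv g c x y)"
proof -
  have e: "c\<^sup>2 * x + y * (c * (g + c - 1) - (g - 1) * y) = c^2*(x+y)*(1 - qv g c x y)"
  proof -
    have "c^2*(x+y)*(1 - qv g c x y) = c^2*(x+y) - c\<^sup>2 * (x+y) * qv g c x y"
      by (simp add: algebra_simps)
    also have "\<dots> = c^2*(x+y) - (g-1)*y*(y-c)" using qv_mul[OF c S] by simp
    finally show ?thesis by (simp add: algebra_simps power2_eq_square)
  qed
  show "1 - qv g c x y \<noteq> 0" using D e by auto
  then show "pv b g n c x y = c*(x+c)/(y-c) + (g + of_nat n + 1 - b)/(1 - qv g c x y)"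
  proof -
    have nz: "c\<^sup>2 * (x+y) \<noteq> 0" using c S by simp
    have "c\<^sup>2 * (g + of_nat n + 1 - b) * (x + y) / (c\<^sup>2 * (x + y) * (1 - qv g c x y))
        = (c\<^sup>2 * (x + y)) * (g + of_nat n + 1 - b) / ((c\<^sup>2 * (x + y)) * (1 - qv g c x y))"
      by (simp add: ac_simps)
    also have "\<dots> = (g + of_nat n + 1 - b) / (1 - qv g c x y)"
      using nz by (rule mult_divide_mult_cancel_left)
    finally show ?thesis unfolding pv_def e by simp
  qed
qed


lemma aux_cancel:
  fixes M P A p :: complex
  shows "M \<noteq> 0 \<Longrightarrow> P \<noteq> 0 \<Longrightarrow> A \<noteq> 0 \<Longrightarrow> M*p/(P*M/A) = p*A/P"
  by (simp add: field_simps)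

lemma disc_core:
  fixes c k m r x y x1 y1 q p q1 p1 :: complex
  assumes c: "c \<noteq> 0" and k: "k \<noteq> 0" and S: "x + y \<noteq> 0" and Y: "y \<noteq> c"
    and q1ne: "1 - q \<noteq> 0"
    and hq: "c\<^sup>2 * (x+y) * q = k*y*(y-c)"
    and hp: "p = c*(x+c)/(y-c) + (m+r)/(1-q)"
    and H1: "(x1+y)*(x+y) = k/c\<^sup>2 * y*(y-c)*(y - c*r/k)"
    and H2: "(x1+y)*(x1+y1) = x1*(x1+c)/(x1 - c*m/k)*(x1 + c*r/k)"
    and U: "x1 + y \<noteq> 0" and X1: "x1 - c*m/k \<noteq> 0"
    and S1: "x1 + y1 \<noteq> 0" and Y1: "y1 \<noteq> c" and q11ne: "1 - q1 \<noteq> 0"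
    and hq1: "c\<^sup>2 * (x1+y1) * q1 = k*y1*(y1-c)"
    and hp1: "p1 = c*(x1+c)/(y1-c) + (m+1+r)/(1-q1)"
    and Ane: "m + (p+c)*q \<noteq> 0" and Bne: "c + p - c*q1 \<noteq> 0"
  shows "q1 = (p+c)/c * (1 - (m+k)/(m+(p+c)*q))"
    and "p1 = 1/(1-q1)*((1-k+r) + (m+k)*p/(c+p-c*q1))"
proof -
  define P where "P = p + c"
  define Z where "Z = c*(x+y)/(y-c)"
  define A where "A = m + q*P"
  define E where "E = m - (1-q)*P"
  have Yc: "y - c \<noteq> 0" using Y by simp
  have Ane': "A \<noteq> 0" using Ane unfolding A_def P_def by (simp add: ac_simps)
  have s1: "x1 + y = q*(y - c*r/k)"
  proof -
    have "k/c\<^sup>2 * y*(y-c) = q*(x+y)" using hq c by (simp add: field_simps)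
    then have "(x1+y)*(x+y) = (q*(y - c*r/k))*(x+y)" using H1 by (simp add: ac_simps)
    then show ?thesis using S by simp
  qed
  have s2: "q*Z = k*y/c" unfolding Z_def using hq c Yc by (simp add: field_simps power2_eq_square)
  have s3: "(1-q)*P = (1-q)*Z + m + r"
  proof -
    have "c*(x+c)/(y-c) + c = Z" unfolding Z_def using Yc by (simp add: field_simps)
    then have "P = Z + (m+r)/(1-q)" unfolding P_def hp by (simp add: algebra_simps)
    then show ?thesis using q1ne by (simp add: field_simps)
  qed
  have s4: "x1 = (c*q/k)*E"
  proof -
    have "E = -(1-q)*Z - r" unfolding E_def s3 by (simp add: algebra_simps)
    then have "(c*q/k)*E = (c*q/k)*(-(1-q)*Z - r)" by simp
    also have "\<dots> = -(c/k)*(1-q)*(q*Z) - c*q*r/k" using k by (simp add: field_simps)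
    also have "\<dots> = -(1-q)*y - c*q*r/k" unfolding s2 using c k by (simp add: field_simps)
    also have "\<dots> = x1" using s1 k by (simp add: field_simps, (simp add: algebra_simps)?)
    finally show ?thesis by simp
  qed
  have s5: "x1 - c*m/k = c*(q-1)*A/k" unfolding s4 A_def E_def using k by (simp add: field_simps, (simp add: algebra_simps)?)
  define R where "R = x1 + c*r/k"
  have s6: "x1 + y = -q*R/(1-q)"
    unfolding R_def using s1 q1ne k by (simp add: field_simps, (simp add: algebra_simps)?)
  have qne: "q \<noteq> 0" and Rne: "R \<noteq> 0" using s6 U by auto
  have s7: "x1 + y1 = x1*(x1+c)*k/(q*c*A)"
  proof -
    have "x1 + y1 = ((x1+y)*(x1+y1))/(x1+y)" using U by simp
    also have "\<dots> = x1*(x1+c)/(x1 - c*m/k)*R / (x1+y)" unfolding R_def by (simp only: H2)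
    also have "\<dots> = x1*(x1+c)*k/(q*c*A)"
      unfolding s5 s6 using qne Rne q1ne c k Ane' by (simp add: field_simps, (simp add: algebra_simps)?)
    finally show ?thesis .
  qed
  have AE: "A = E + P" unfolding A_def E_def by (simp add: algebra_simps)
  have EA: "E = A - P" using AE by simp
  define G where "G = q*E+k"
  have s8: "x1 + c = c*G/k" unfolding G_def using s4 k by (simp add: field_simps)
  have s9: "x1 + y1 = c*G*E/(k*A)" unfolding s7 s8 using qne c k Ane' unfolding s4 by (simp add: field_simps)
  have s10: "y1 = (c*E/k)*(k - q*P)/A"
  proof -
    have "y1 = (x1 + y1) - x1" by simp
    also have "\<dots> = (c*E/k)*(k - q*P)/A" unfolding s9 unfolding G_def s4 unfolding EA using c k Ane'
      by (simp add: field_simps, (simp add: algebra_simps)?)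
    finally show ?thesis .
  qed
  have s11: "y1 - c = -(c*P/k)*G/A" unfolding s10 G_def unfolding EA using c k Ane'
      by (simp add: field_simps, (simp add: algebra_simps)?)
  have Ene: "E \<noteq> 0" and QEne: "G \<noteq> 0" using s9 S1 by auto
  have Pne: "P \<noteq> 0" using s11 Y1 by auto
  have s12: "q1 = P*(q*P-k)/(c*A)"
  proof -
    have nz: "c\<^sup>2 * (x1+y1) \<noteq> 0" using S1 c by simp
    have "q1 = (c\<^sup>2 * (x1+y1) * q1)/(c\<^sup>2 * (x1+y1))" using nz by simp
    also have "\<dots> = k*y1*(y1-c)/(c\<^sup>2 * (x1+y1))" by (simp only: hq1)
    also have "\<dots> = P*(q*P-k)/(c*A)"
      unfolding s9 unfolding s11 unfolding s10 using c k Ane' Ene QEne by (simp add: field_simps power2_eq_square)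
    finally show ?thesis .
  qed
  show "q1 = (p+c)/c * (1 - (m+k)/(m+(p+c)*q))"
  proof -
    have "(p+c)/c * (1 - (m+k)/(m+(p+c)*q)) = P/c*(1-(m+k)/A)" by (simp add: P_def A_def ac_simps)
    also have "\<dots> = q1" unfolding s12 using c Ane' by (simp add: field_simps, (simp add: algebra_simps A_def)?)
    finally show ?thesis by simp
  qed
  have s13: "c*(x1+c)/(y1-c) = -c*A/P" unfolding s8 s11 using c k Ane' QEne Pne by (simp add: field_simps)
  have Bne': "P - c*q1 \<noteq> 0" using Bne unfolding P_def by (simp add: algebra_simps)
  have s14: "P - c*q1 = P*(m+k)/A" unfolding s12 using c Ane'
    by (simp add: field_simps, (simp add: algebra_simps A_def)?)
  have mk: "m + k \<noteq> 0" using Bne' s14 by auto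
  have s15: "1 - q1 = (c*A - P*(q*P-k))/(c*A)" unfolding s12 using c Ane' by (simp add: field_simps)
  show "p1 = 1/(1-q1)*((1-k+r) + (m+k)*p/(c+p-c*q1))"
  proof -
    have pP: "p = P - c" unfolding P_def by simp
    have "c+p-c*q1 = P - c*q1" unfolding P_def by simp
    then have cp: "c+p-c*q1 = P*(m+k)/A" using s14 by simp
    have "(m+k)*p/(c+p-c*q1) = (P-c)*A/P" unfolding cp aux_cancel[OF mk Pne Ane'] unfolding pP using mk Pne Ane' by (simp add: field_simps)
    then have "1/(1-q1)*((1-k+r) + (m+k)*p/(c+p-c*q1)) = 1/(1-q1)*((1-k+r) + (P-c)*A/P)" by simp
    also have "\<dots> = -c*A/P + (m+1+r)/(1-q1)"
      using q11ne Pne c Ane' unfolding s15 A_def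
      by (simp add: field_simps, (simp add: algebra_simps)?)
    finally show ?thesis unfolding hp1 s13 by simp
  qed
qed

lemma Lq:
  fixes x y :: "complex \<Rightarrow> complex"
  assumes dx: "(x has_field_derivative dx) (at t)" and dy: "(y has_field_derivative dy) (at t)"
    and t: "t \<noteq> 0" and S: "x t + y t \<noteq> 0"
  shows "((\<lambda>s. qv g s (x s) (y s)) has_field_derivative
     (g-1)*((dy*(y t - t) + y t*(dy - 1))*(t\<^sup>2*(x t+y t)) - y t*(y t - t)*(2*t*(x t+y t) + t\<^sup>2*(dx+dy)))/(t\<^sup>2*(x t+y t))\<^sup>2) (at t)"
  unfolding qv_def
  apply (rule derivative_eq_intros dx dy refl | simp add: t S)+
  apply (simp add: power2_eq_square algebra_simps)
  done

lemma Lp: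
  fixes x y :: "complex \<Rightarrow> complex"
  assumes dx: "(x has_field_derivative dx) (at t)" and dy: "(y has_field_derivative dy) (at t)"
    and t: "t \<noteq> 0" and S: "x t + y t \<noteq> 0" and Y: "y t \<noteq> t"
    and D: "t\<^sup>2 * x t + y t * (t * (g + t - 1) - (g - 1) * y t) \<noteq> 0"
  shows "((\<lambda>s. pv b g n s (x s) (y s)) has_field_derivative
     ((x t + t + (dx + 1) * t) * (y t - t) - t * (x t + t) * (dy - 1)) /
     ((y t - t) * (y t - t)) +
     ((2 * t * (g + of_nat n + 1 - b) * (x t + y t) +
       (dx + dy) * (t\<^sup>2 * (g + of_nat n + 1 - b))) *
      (t\<^sup>2 * x t + y t * (t * (g + t - 1) - (g - 1) * y t)) -
      t\<^sup>2 * (g + of_nat n + 1 - b) * (x t + y t) *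
      (2 * t * x t + dx * t\<^sup>2 +
       (dy * (t * (g + t - 1) - (g - 1) * y t) +
        (2 * t + (g - 1) - dy * (g - 1)) * y t))) /
     ((t\<^sup>2 * x t + y t * (t * (g + t - 1) - (g - 1) * y t)) *
      (t\<^sup>2 * x t + y t * (t * (g + t - 1) - (g - 1) * y t)))) (at t)"
  unfolding pv_def
  apply (rule derivative_eq_intros dx dy refl | simp add: t S Y D)+
  done


lemma alg_q:
  fixes x y c g b N dx dy q p :: complex
  assumes c: "c \<noteq> 0" and S0: "x + y \<noteq> 0" and Y0: "y \<noteq> c"
    and D0: "c\<^sup>2 * x + y * (c * (g + c - 1) - (g - 1) * y) \<noteq> 0"
    and hdx: "dx = ((N + 1) * x + N * y) / c
             - (g - 1) / c\<^sup>2 * x * (x + y)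
             + x * (x + c) * (c * (g - b) + (g - 1) * x) / (c\<^sup>2 * (x + y))"
    and hdy: "dy = - x + y / c
             + y * (- 1 + (b - 1) * (y - c) / (c * (x + y))
                      + (g - 1) * (y - c)\<^sup>2 / (c\<^sup>2 * (x + y)))"
    and hq: "q = (g - 1) * y * (y - c) / (c\<^sup>2 * (x + y))"
    and hp: "p = c * (x + c) / (y - c) + c\<^sup>2 * (g + N + 1 - b) * (x + y)
       / (c\<^sup>2 * x + y * (c * (g + c - 1) - (g - 1) * y))"
  shows "(g-1)*((dy*(y - c) + y*(dy - 1))*(c\<^sup>2*(x+y)) - y*(y - c)*(2*c*(x+y) + c\<^sup>2*(dx+dy)))/(c\<^sup>2*(x+y))\<^sup>2
     = 1 / c * (q * (q - 1) * (2 * p + c) - (g-1) * (q - 1) - (b - g - N - 1) * q)"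
proof -
  define S where "S = x + y"
  define Y where "Y = y - c"
  define D where "D = c\<^sup>2 * x + y * (c * (g + c - 1) - (g - 1) * y)"
  define k where "k = g - 1"
  define r where "r = g - b"
  define m where "m = N + 1"
  define L where "L = m + r"
  define A where "A = -c*c*x*S+c*y*S-c*c*y*S+(k-r)*c*y*Y+k*y*Y*Y"
  define B where "B = c*S*(m*x+(m-1)*y)-k*x*S*S+x*(x+c)*(c*r+k*x)"
  define Pn where "Pn = c*(x+c)*D+L*c*c*S*Y"
  have S: "S \<noteq> 0" and Y: "Y \<noteq> 0" and D: "D \<noteq> 0" using S0 Y0 D0 by (auto simp: S_def Y_def D_def)
  have e1: "x + y = S" and e2: "y - c = Y" and e3: "c\<^sup>2 * x + y * (c * (g + c - 1) - (g - 1) * y) = D"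
    and e4: "g - 1 = k" by (simp_all add: S_def Y_def D_def k_def)
  have Drel: "D = c*c*S - k*y*Y" unfolding D_def S_def Y_def k_def by algebra
  have dxB: "dx = B/(c*c*S)"
  proof -
    have "dx = ((N + 1) * x + N * y) / c - k / c\<^sup>2 * x * S + x * (x + c) * (c * (g - b) + k * x) / (c\<^sup>2 * S)"
      using hdx unfolding e1 e4 .
    also have "\<dots> = B/(c*c*S)" unfolding B_def using c S
      apply (simp add: field_simps power2_eq_square)
      unfolding m_def r_def by algebra
    finally show ?thesis .
  qed
  have dyA: "dy = A/(c*c*S)"
  proof -
    have "dy = - x + y / c + y * (- 1 + (b - 1) * Y / (c * S) + k * Y\<^sup>2 / (c\<^sup>2 * S))"
      using hdy unfolding e1 e2 e4 .
    also have "\<dots> = A/(c*c*S)" unfolding A_def using c S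
      apply (simp add: field_simps power2_eq_square)
      unfolding k_def r_def by algebra
    finally show ?thesis .
  qed
  have L1: "(g-1)*((dy*(y - c) + y*(dy - 1))*(c\<^sup>2*(x+y)) - y*(y - c)*(2*c*(x+y) + c\<^sup>2*(dx+dy)))/(c\<^sup>2*(x+y))\<^sup>2
     = k*(S*A*(Y+y)-y*c*c*S*S-2*c*y*Y*S*S-y*Y*(A+B))/(c*c*c*c*S*S*S)"
    unfolding e1 e2 e4 dxB dyA using c S
    by (simp add: field_simps power2_eq_square)
  have hq': "q = k*y*Y/(c*c*S)" using hq unfolding e1 e2 e4 by (simp add: power2_eq_square)
  have hp': "p = Pn/(Y*D)"
  proof -
    have "p = c * (x + c) / Y + c*c * L * S / D" using hp unfolding e1 e2 e3
      by (simp add: power2_eq_square L_def m_def r_def algebra_simps)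
    also have "\<dots> = Pn/(Y*D)" unfolding Pn_def using Y D by (simp add: field_simps)
    finally show ?thesis .
  qed
  have R1: "1 / c * (q * (q - 1) * (2 * p + c) - (g-1) * (q - 1) - (b - g - N - 1) * q)
     = k*(c*y*(k*y*Y-c*c*S)*(2*x+y+c)-L*y*Y*c*c*S-(k*y*Y-c*c*S)*c*c*S)/(c*c*c*c*c*S*S)"
    unfolding hq' hp' e4 using c S Y D
    apply (simp add: field_simps)
    using Drel unfolding Pn_def L_def m_def r_def k_def S_def Y_def by algebra
  have PI: "c*(S*A*(2*y-c)-y*c*c*S*S-2*c*y*Y*S*S-y*Y*(A+B))
       = S*(c*y*(k*y*Y-c*c*S)*(2*x+y+c)-L*y*Y*c*c*S-(k*y*Y-c*c*S)*c*c*S)"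
    unfolding A_def B_def L_def S_def Y_def by algebra
  show ?thesis unfolding L1 R1 using c S
    apply (simp add: field_simps)
    using PI unfolding Y_def by algebra
qed

lemma alg_p:
  fixes x y c g b N dx dy q p :: complex
  assumes c: "c \<noteq> 0" and S0: "x + y \<noteq> 0" and Y0: "y \<noteq> c"
    and D0: "c\<^sup>2 * x + y * (c * (g + c - 1) - (g - 1) * y) \<noteq> 0"
    and hdx: "dx = ((N + 1) * x + N * y) / c
             - (g - 1) / c\<^sup>2 * x * (x + y)
             + x * (x + c) * (c * (g - b) + (g - 1) * x) / (c\<^sup>2 * (x + y))"
    and hdy: "dy = - x + y / c
             + y * (- 1 + (b - 1) * (y - c) / (c * (x + y))
                      + (g - 1) * (y - c)\<^sup>2 / (c\<^sup>2 * (x + y)))"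
    and hq: "q = (g - 1) * y * (y - c) / (c\<^sup>2 * (x + y))"
    and hp: "p = c * (x + c) / (y - c) + c\<^sup>2 * (g + N + 1 - b) * (x + y)
       / (c\<^sup>2 * x + y * (c * (g + c - 1) - (g - 1) * y))"
  shows "((x + c + (dx + 1) * c) * (y - c) - c * (x + c) * (dy - 1)) /
     ((y - c) * (y - c)) +
     ((2 * c * (g + N + 1 - b) * (x + y) +
       (dx + dy) * (c\<^sup>2 * (g + N + 1 - b))) *
      (c\<^sup>2 * x + y * (c * (g + c - 1) - (g - 1) * y)) -
      c\<^sup>2 * (g + N + 1 - b) * (x + y) *
      (2 * c * x + dx * c\<^sup>2 +
       (dy * (c * (g + c - 1) - (g - 1) * y) +
        (2 * c + (g - 1) - dy * (g - 1)) * y))) /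
     ((c\<^sup>2 * x + y * (c * (g + c - 1) - (g - 1) * y)) *
      (c\<^sup>2 * x + y * (c * (g + c - 1) - (g - 1) * y)))
     = 1 / c * (p * (p + c) * (1 - 2 * q) + ((g - 1) + (b - g - N - 1)) * p - (2 - b) * c)"
proof -
  define S where "S = x + y"
  define Y where "Y = y - c"
  define D where "D = c\<^sup>2 * x + y * (c * (g + c - 1) - (g - 1) * y)"
  define k where "k = g - 1"
  define r where "r = g - b"
  define m where "m = N + 1"
  define L where "L = m + r"
  define A where "A = -c*c*x*S+c*y*S-c*c*y*S+(k-r)*c*y*Y+k*y*Y*Y"
  define B where "B = c*S*(m*x+(m-1)*y)-k*x*S*S+x*(x+c)*(c*r+k*x)"
  define Pn where "Pn = c*(x+c)*D+L*c*c*S*Y"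
  have S: "S \<noteq> 0" and Y: "Y \<noteq> 0" and D: "D \<noteq> 0" using S0 Y0 D0 by (auto simp: S_def Y_def D_def)
  have e1: "x + y = S" and e2: "y - c = Y" and e3: "c\<^sup>2 * x + y * (c * (g + c - 1) - (g - 1) * y) = D"
    and e4: "g - 1 = k" and e5: "g + N + 1 - b = L" and e6: "g + c - 1 = k + c"
    by (simp_all add: S_def Y_def D_def k_def L_def m_def r_def algebra_simps)
  have Drel: "D = c*c*S - k*y*Y" unfolding D_def S_def Y_def k_def by algebra
  have dxB: "dx = B/(c*c*S)"
  proof -
    have "dx = ((N + 1) * x + N * y) / c - k / c\<^sup>2 * x * S + x * (x + c) * (c * (g - b) + k * x) / (c\<^sup>2 * S)"
      using hdx unfolding e1 e4 .
    also have "\<dots> = B/(c*c*S)" unfolding B_def using c S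
      apply (simp add: field_simps power2_eq_square)
      unfolding m_def r_def by algebra
    finally show ?thesis .
  qed
  have dyA: "dy = A/(c*c*S)"
  proof -
    have "dy = - x + y / c + y * (- 1 + (b - 1) * Y / (c * S) + k * Y\<^sup>2 / (c\<^sup>2 * S))"
      using hdy unfolding e1 e2 e4 .
    also have "\<dots> = A/(c*c*S)" unfolding A_def using c S
      apply (simp add: field_simps power2_eq_square)
      unfolding k_def r_def by algebra
    finally show ?thesis .
  qed
  have L1: "((x + c + (dx + 1) * c) * (y - c) - c * (x + c) * (dy - 1)) /
     ((y - c) * (y - c)) +
     ((2 * c * (g + N + 1 - b) * (x + y) +
       (dx + dy) * (c\<^sup>2 * (g + N + 1 - b))) *
      (c\<^sup>2 * x + y * (c * (g + c - 1) - (g - 1) * y)) -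
      c\<^sup>2 * (g + N + 1 - b) * (x + y) *
      (2 * c * x + dx * c\<^sup>2 +
       (dy * (c * (g + c - 1) - (g - 1) * y) +
        (2 * c + (g - 1) - dy * (g - 1)) * y))) /
     ((c\<^sup>2 * x + y * (c * (g + c - 1) - (g - 1) * y)) *
      (c\<^sup>2 * x + y * (c * (g + c - 1) - (g - 1) * y)))
    = (D*D*(c*S*((x+2*c)*Y+c*(x+c))+B*Y-(x+c)*A)+c*L*Y*Y*((2*c*S*S+A+B)*D-c*c*S*S*(2*c*x+(2*c+k)*y)-c*c*S*B-S*A*(c*(k+c)-2*k*y)))/(c*S*Y*Y*D*D)"
    unfolding e3 unfolding e1 e2 e4 e5 e6 dxB dyA using c S Y D
    apply (simp add: field_simps power2_eq_square)
    done
  have hq': "q = k*y*Y/(c*c*S)" using hq unfolding e1 e2 e4 by (simp add: power2_eq_square)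
  have hp': "p = Pn/(Y*D)"
  proof -
    have "p = c * (x + c) / Y + c*c * L * S / D" using hp unfolding e1 e2 e3
      by (simp add: power2_eq_square L_def m_def r_def algebra_simps)
    also have "\<dots> = Pn/(Y*D)" unfolding Pn_def using Y D by (simp add: field_simps)
    finally show ?thesis .
  qed
  have R1: "1 / c * (p * (p + c) * (1 - 2 * q) + ((g - 1) + (b - g - N - 1)) * p - (2 - b) * c)
     = (Pn*(Pn+c*Y*D)*(c*c*S-2*k*y*Y)+(k-L)*Pn*Y*D*c*c*S-(1-k+r)*c*c*c*S*Y*Y*D*D)/(c*c*c*S*Y*Y*D*D)"
    unfolding hq' hp' using c S Y D
    apply (simp add: field_simps)
    unfolding L_def m_def r_def k_def by algebra
  have PI: "c*c*(D*D*(c*S*((x+2*c)*Y+c*(x+c))+B*Y-(x+c)*A)+c*L*Y*Y*((2*c*S*S+A+B)*D-c*c*S*S*(2*c*x+(2*c+k)*y)-c*c*S*B-S*A*(c*(k+c)-2*k*y)))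
       = Pn*(Pn+c*Y*D)*(c*c*S-2*k*y*Y)+(k-L)*Pn*Y*D*c*c*S-(1-k+r)*c*c*c*S*Y*Y*D*D"
    unfolding Pn_def Drel unfolding A_def B_def L_def S_def Y_def by algebra
  show ?thesis unfolding L1 R1 using c S Y D
    apply (simp add: field_simps)
    using PI by algebra
qed


theorem proposition4p18:
  fixes \<beta> \<gamma> :: complex
  assumes h\<gamma>: "\<gamma> \<noteq> 1" and h\<beta>\<gamma>: "\<beta> \<noteq> \<gamma>"
  shows
   "(\<forall>(c::complex) (x::nat \<Rightarrow> complex) (y::nat \<Rightarrow> complex).
       c \<noteq> 0
     \<and> (\<forall>n. (x (Suc n) + y n) * (x n + y n)
              = (\<gamma> - 1) / c\<^sup>2 * y n * (y n - c) * (y n - c * (\<gamma> - \<beta>) / (\<gamma> - 1)))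
     \<and> (\<forall>n. (x (Suc n) + y n) * (x (Suc n) + y (Suc n))
              = x (Suc n) * (x (Suc n) + c) / (x (Suc n) - c * of_nat (Suc n) / (\<gamma> - 1))
                * (x (Suc n) + c * (\<gamma> - \<beta>) / (\<gamma> - 1)))
     \<and> (\<forall>n. x n + y n \<noteq> 0 \<and> y n \<noteq> c
            \<and> c\<^sup>2 * x n + y n * (c * (\<gamma> + c - 1) - (\<gamma> - 1) * y n) \<noteq> 0
            \<and> x (Suc n) + y n \<noteq> 0
            \<and> x (Suc n) \<noteq> c * of_nat (Suc n) / (\<gamma> - 1)
            \<and> a0 n + (pv \<beta> \<gamma> n c (x n) (y n) + c) * qv \<gamma> c (x n) (y n) \<noteq> 0
            \<and> c + pv \<beta> \<gamma> n c (x n) (y n) - c * qv \<gamma> c (x (Suc n)) (y (Suc n)) \<noteq> 0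
            \<and> 1 - qv \<gamma> c (x (Suc n)) (y (Suc n)) \<noteq> 0)
     \<longrightarrow> (\<forall>n.
           (let t = c; q = qv \<gamma> c (x n) (y n); p = pv \<beta> \<gamma> n c (x n) (y n);
                q' = qv \<gamma> c (x (Suc n)) (y (Suc n)); p' = pv \<beta> \<gamma> (Suc n) c (x (Suc n)) (y (Suc n))
            in q' = (p + t) / t * (1 - (a0 n + a1 \<gamma>) / (a0 n + (p + t) * q))
             \<and> p' = 1 / (1 - q') * (a2 \<beta> + (a0 n + a1 \<gamma>) * p / (t + p - t * q'))
             \<and> a0 (Suc n) = a0 n + 1
             \<and> a3 \<beta> \<gamma> (Suc n) = a3 \<beta> \<gamma> n - 1)))
  \<and> (\<forall>(n::nat) (S::complex set) (x::complex \<Rightarrow> complex) (y::complex \<Rightarrow> complex).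
       open S
     \<and> (\<forall>c\<in>S. c \<noteq> 0 \<and> x c + y c \<noteq> 0 \<and> y c \<noteq> c
              \<and> c\<^sup>2 * x c + y c * (c * (\<gamma> + c - 1) - (\<gamma> - 1) * y c) \<noteq> 0)
     \<and> (\<forall>c\<in>S.
          (x has_field_derivative
             ((of_nat n + 1) * x c + of_nat n * y c) / c
             - (\<gamma> - 1) / c\<^sup>2 * x c * (x c + y c)
             + x c * (x c + c) * (c * (\<gamma> - \<beta>) + (\<gamma> - 1) * x c) / (c\<^sup>2 * (x c + y c))) (at c)
        \<and> (y has_field_derivative
             - x c + y c / c
             + y c * (- 1 + (\<beta> - 1) * (y c - c) / (c * (x c + y c))
                      + (\<gamma> - 1) * (y c - c)\<^sup>2 / (c\<^sup>2 * (x c + y c)))) (at c))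
     \<longrightarrow> (\<forall>t\<in>S.
           (let q = qv \<gamma> t (x t) (y t); p = pv \<beta> \<gamma> n t (x t) (y t) in
              ((\<lambda>s. qv \<gamma> s (x s) (y s)) has_field_derivative
                 1 / t * (q * (q - 1) * (2 * p + t) - a1 \<gamma> * (q - 1) - a3 \<beta> \<gamma> n * q)) (at t)
            \<and> ((\<lambda>s. pv \<beta> \<gamma> n s (x s) (y s)) has_field_derivative
                 1 / t * (p * (p + t) * (1 - 2 * q) + (a1 \<gamma> + a3 \<beta> \<gamma> n) * p - a2 \<beta> * t)) (at t))))"
proof (intro conjI allI impI ballI)
  fix c :: complex and x y :: "nat \<Rightarrow> complex" and n :: nat
  assume H: "c \<noteq> 0
     \<and> (\<forall>n. (x (Suc n) + y n) * (x n + y n)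
              = (\<gamma> - 1) / c\<^sup>2 * y n * (y n - c) * (y n - c * (\<gamma> - \<beta>) / (\<gamma> - 1)))
     \<and> (\<forall>n. (x (Suc n) + y n) * (x (Suc n) + y (Suc n))
              = x (Suc n) * (x (Suc n) + c) / (x (Suc n) - c * of_nat (Suc n) / (\<gamma> - 1))
                * (x (Suc n) + c * (\<gamma> - \<beta>) / (\<gamma> - 1)))
     \<and> (\<forall>n. x n + y n \<noteq> 0 \<and> y n \<noteq> c
            \<and> c\<^sup>2 * x n + y n * (c * (\<gamma> + c - 1) - (\<gamma> - 1) * y n) \<noteq> 0
            \<and> x (Suc n) + y n \<noteq> 0
            \<and> x (Suc n) \<noteq> c * of_nat (Suc n) / (\<gamma> - 1)
            \<and> a0 n + (pv \<beta> \<gamma> n c (x n) (y n) + c) * qv \<gamma> c (x n) (y n) \<noteq> 0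
            \<and> c + pv \<beta> \<gamma> n c (x n) (y n) - c * qv \<gamma> c (x (Suc n)) (y (Suc n)) \<noteq> 0
            \<and> 1 - qv \<gamma> c (x (Suc n)) (y (Suc n)) \<noteq> 0)"
  have c: "c \<noteq> 0" using H by blast
  have E1: "(x (Suc n) + y n) * (x n + y n)
              = (\<gamma> - 1) / c\<^sup>2 * y n * (y n - c) * (y n - c * (\<gamma> - \<beta>) / (\<gamma> - 1))" using H by blast
  have E2: "(x (Suc n) + y n) * (x (Suc n) + y (Suc n))
              = x (Suc n) * (x (Suc n) + c) / (x (Suc n) - c * (of_nat n + 1) / (\<gamma> - 1))
                * (x (Suc n) + c * (\<gamma> - \<beta>) / (\<gamma> - 1))" using H by simp
  have N0: "x n + y n \<noteq> 0 \<and> y n \<noteq> c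
            \<and> c\<^sup>2 * x n + y n * (c * (\<gamma> + c - 1) - (\<gamma> - 1) * y n) \<noteq> 0
            \<and> x (Suc n) + y n \<noteq> 0
            \<and> x (Suc n) \<noteq> c * of_nat (Suc n) / (\<gamma> - 1)
            \<and> a0 n + (pv \<beta> \<gamma> n c (x n) (y n) + c) * qv \<gamma> c (x n) (y n) \<noteq> 0
            \<and> c + pv \<beta> \<gamma> n c (x n) (y n) - c * qv \<gamma> c (x (Suc n)) (y (Suc n)) \<noteq> 0
            \<and> 1 - qv \<gamma> c (x (Suc n)) (y (Suc n)) \<noteq> 0" using H by blast
  have N1: "x (Suc n) + y (Suc n) \<noteq> 0 \<and> y (Suc n) \<noteq> c
            \<and> c\<^sup>2 * x (Suc n) + y (Suc n) * (c * (\<gamma> + c - 1) - (\<gamma> - 1) * y (Suc n)) \<noteq> 0"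
    using H by blast
  define q where "q = qv \<gamma> c (x n) (y n)"
  define p where "p = pv \<beta> \<gamma> n c (x n) (y n)"
  define q1 where "q1 = qv \<gamma> c (x (Suc n)) (y (Suc n))"
  define p1 where "p1 = pv \<beta> \<gamma> (Suc n) c (x (Suc n)) (y (Suc n))"
  have k: "\<gamma> - 1 \<noteq> 0" using h\<gamma> by simp
  have pa0: "1 - q \<noteq> 0" "p = c*(x n+c)/(y n-c) + (\<gamma> + of_nat n + 1 - \<beta>)/(1 - q)"
    using pv_alt(1)[where g=\<gamma> and c=c and x="x n" and y="y n"] pv_alt(2)[where g=\<gamma> and b=\<beta> and c=c and x="x n" and y="y n" and n=n] c N0 unfolding q_def p_def by auto
  have pa1: "1 - q1 \<noteq> 0" "p1 = c*(x (Suc n)+c)/(y (Suc n)-c) + (\<gamma> + of_nat (Suc n) + 1 - \<beta>)/(1 - q1)"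
    using pv_alt(1)[where g=\<gamma> and c=c and x="x (Suc n)" and y="y (Suc n)"] pv_alt(2)[where g=\<gamma> and b=\<beta> and c=c and x="x (Suc n)" and y="y (Suc n)" and n="Suc n"] c N1 unfolding q1_def p1_def by auto
  have hp: "p = c*(x n+c)/(y n-c) + ((of_nat n + 1) + (\<gamma> - \<beta>))/(1 - q)"
    using pa0(2) by (simp add: algebra_simps)
  have hp1: "p1 = c*(x (Suc n)+c)/(y (Suc n)-c) + ((of_nat n + 1) + 1 + (\<gamma> - \<beta>))/(1 - q1)"
    using pa1(2) by (simp add: algebra_simps)
  have X1: "x (Suc n) - c * (of_nat n + 1) / (\<gamma> - 1) \<noteq> 0" using N0 by (simp add: add.commute)
  have Ane: "(of_nat n + 1) + (p + c) * q \<noteq> 0" using N0 unfolding a0_def p_def q_def by simp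
  have Bne: "c + p - c * q1 \<noteq> 0" using N0 unfolding p_def q1_def by simp
  have hq0: "c\<^sup>2 * (x n + y n) * q = (\<gamma> - 1) * y n * (y n - c)"
    unfolding q_def using qv_mul[OF c] N0 by blast
  have hq1: "c\<^sup>2 * (x (Suc n) + y (Suc n)) * q1 = (\<gamma> - 1) * y (Suc n) * (y (Suc n) - c)"
    unfolding q1_def using qv_mul[OF c] N1 by blast
  have S0: "x n + y n \<noteq> 0" and Y0: "y n \<noteq> c" and U: "x (Suc n) + y n \<noteq> 0" using N0 by auto
  have S1: "x (Suc n) + y (Suc n) \<noteq> 0" and Y1: "y (Suc n) \<noteq> c" using N1 by auto
  note DC = disc_core[OF c k S0 Y0 pa0(1) hq0 hp E1 E2 U X1 S1 Y1 pa1(1) hq1 hp1 Ane Bne]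
  have r1: "q1 = (p + c) / c * (1 - (a0 n + a1 \<gamma>) / (a0 n + (p + c) * q))"
    using DC(1) N0 N1 unfolding a0_def a1_def q_def q1_def by simp
  have a2e: "a2 \<beta> = 1 - (\<gamma> - 1) + (\<gamma> - \<beta>)" unfolding a2_def by (simp add: algebra_simps)
  have r2: "p1 = 1 / (1 - q1) * (a2 \<beta> + (a0 n + a1 \<gamma>) * p / (c + p - c * q1))"
    using DC(2) N0 N1 unfolding a0_def a1_def a2e q_def q1_def by simp
  show "let t = c; q = qv \<gamma> c (x n) (y n); p = pv \<beta> \<gamma> n c (x n) (y n);
                q' = qv \<gamma> c (x (Suc n)) (y (Suc n)); p' = pv \<beta> \<gamma> (Suc n) c (x (Suc n)) (y (Suc n))
            in q' = (p + t) / t * (1 - (a0 n + a1 \<gamma>) / (a0 n + (p + t) * q))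
             \<and> p' = 1 / (1 - q') * (a2 \<beta> + (a0 n + a1 \<gamma>) * p / (t + p - t * q'))
             \<and> a0 (Suc n) = a0 n + 1
             \<and> a3 \<beta> \<gamma> (Suc n) = a3 \<beta> \<gamma> n - 1"
    unfolding Let_def using r1 r2 unfolding q_def p_def q1_def p1_def
    by (simp add: a0_def a3_def algebra_simps)
next
  fix n :: nat and S :: "complex set" and x y :: "complex \<Rightarrow> complex" and t :: complex
  assume H: "open S
     \<and> (\<forall>c\<in>S. c \<noteq> 0 \<and> x c + y c \<noteq> 0 \<and> y c \<noteq> c
              \<and> c\<^sup>2 * x c + y c * (c * (\<gamma> + c - 1) - (\<gamma> - 1) * y c) \<noteq> 0)
     \<and> (\<forall>c\<in>S.
          (x has_field_derivative
             ((of_nat n + 1) * x c + of_nat n * y c) / c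
             - (\<gamma> - 1) / c\<^sup>2 * x c * (x c + y c)
             + x c * (x c + c) * (c * (\<gamma> - \<beta>) + (\<gamma> - 1) * x c) / (c\<^sup>2 * (x c + y c))) (at c)
        \<and> (y has_field_derivative
             - x c + y c / c
             + y c * (- 1 + (\<beta> - 1) * (y c - c) / (c * (x c + y c))
                      + (\<gamma> - 1) * (y c - c)\<^sup>2 / (c\<^sup>2 * (x c + y c)))) (at c))"
    and tS: "t \<in> S"
  define dx where "dx = ((of_nat n + 1) * x t + of_nat n * y t) / t
             - (\<gamma> - 1) / t\<^sup>2 * x t * (x t + y t)
             + x t * (x t + t) * (t * (\<gamma> - \<beta>) + (\<gamma> - 1) * x t) / (t\<^sup>2 * (x t + y t))"
  define dy where "dy = - x t + y t / t
             + y t * (- 1 + (\<beta> - 1) * (y t - t) / (t * (x t + y t))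
                      + (\<gamma> - 1) * (y t - t)\<^sup>2 / (t\<^sup>2 * (x t + y t)))"
  have NZ: "t \<noteq> 0" "x t + y t \<noteq> 0" "y t \<noteq> t"
     "t\<^sup>2 * x t + y t * (t * (\<gamma> + t - 1) - (\<gamma> - 1) * y t) \<noteq> 0" using H tS by auto
  have DX: "(x has_field_derivative dx) (at t)" and DY: "(y has_field_derivative dy) (at t)"
    using H tS unfolding dx_def dy_def by auto
  define q where "q = qv \<gamma> t (x t) (y t)"
  define p where "p = pv \<beta> \<gamma> n t (x t) (y t)"
  have hq: "q = (\<gamma> - 1) * y t * (y t - t) / (t\<^sup>2 * (x t + y t))" unfolding q_def qv_def ..
  have hp: "p = t * (x t + t) / (y t - t) + t\<^sup>2 * (\<gamma> + of_nat n + 1 - \<beta>) * (x t + y t)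
       / (t\<^sup>2 * x t + y t * (t * (\<gamma> + t - 1) - (\<gamma> - 1) * y t))" unfolding p_def pv_def ..
  note eq1 = alg_q[OF NZ(1) NZ(2) NZ(3) NZ(4) dx_def dy_def hq hp]
  note eq2 = alg_p[OF NZ(1) NZ(2) NZ(3) NZ(4) dx_def dy_def hq hp]
  note D1 = Lq[OF DX DY NZ(1) NZ(2), of \<gamma>]
  note D2 = Lp[OF DX DY NZ(1) NZ(2) NZ(3) NZ(4), of \<beta> n]
  show "let q = qv \<gamma> t (x t) (y t); p = pv \<beta> \<gamma> n t (x t) (y t) in
              ((\<lambda>s. qv \<gamma> s (x s) (y s)) has_field_derivative
                 1 / t * (q * (q - 1) * (2 * p + t) - a1 \<gamma> * (q - 1) - a3 \<beta> \<gamma> n * q)) (at t)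
            \<and> ((\<lambda>s. pv \<beta> \<gamma> n s (x s) (y s)) has_field_derivative
                 1 / t * (p * (p + t) * (1 - 2 * q) + (a1 \<gamma> + a3 \<beta> \<gamma> n) * p - a2 \<beta> * t)) (at t)"
    unfolding Let_def q_def[symmetric] p_def[symmetric] a1_def a2_def a3_def
    using D1 D2 eq1 eq2 by simp
qed

end
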